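(* Let $M$ be a duplicial module in a pre-additive category, $n\ge1$, $1\le k\le n$, and $0\le i_k<i_{k-1}<\cdots<i_1<n$. Then, as morphisms $M_{n-k}\to M_n$, $$\kappa_n\, s_{n-1,i_1}s_{n-2,i_2}\cdots s_{n-k,i_k}=\begin{cases}0,& i_k=0,\\ (-1)^k\, s_{n-1,i_1-1}s_{n-2,i_2-1}\cdots s_{n-k,i_k-1}\,\kappa_{n-k},& i_k\ge1.\end{cases}$$
   Context: Let $\mathcal A$ be a pre-additive category. Let $\Lambda_+$ be the category with objects $[n]$, $n\ge0$, where $\Lambda_+([m],[n])$ is the set of weakly monotone $f:\mathbb Z\to\mathbb Z$ with $f(j+m+1)=f(j)+n+1$ for all $j$ and $f(0)\ge0$. Define $\varepsilon^n_i:[n-1]\to[n]$ ($n\ge1$, $0\le i\le n$) by $\varepsilon^n_i(j)=j$ for $0\le j<i$, $j+1$ for $i\le j\le n-1$, and $\eta^n_i:[n+1]\to[n]$ ($0\le i\le n+1$) by $\eta^n_i(j)=j$ for $0\le j\le i$, $j-1$ for $i<j\le n+1$. A duplicial module is a functor $M:\Lambda_+^{op}\to\mathcal A$; $M_n=M([n])$, $\partial_{n,i}=M(\varepsilon^n_i):M_n\to M_{n-1}$, $s_{n,i}=M(\eta^n_i):M_n\to M_{n+1}$. Convention $M_{-1}=0$, maps into/out of it zero. The Karoubi operator is $\kappa_n=(-1)^n(\partial_{n+1,0}s_{n,n+1}-s_{n-1,n}\partial_{n,0}):M_n\to M_n$ (so $\kappa_0=\partial_{1,0}s_{0,1}$).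 *)

theory Defs
  imports Main
begin

text \<open>Hom C a b is the set of morphisms a -> b; Comp C g f is "g after f".
  Each hom-set is an abelian group (Add, Zero, Neg) and composition is bilinear.\<close>

record ('o, 'm) precat =
  Ob   :: "'o set"
  Hom  :: "'o \<Rightarrow> 'o \<Rightarrow> 'm set"
  Comp :: "'m \<Rightarrow> 'm \<Rightarrow> 'm"
  Id   :: "'o \<Rightarrow> 'm"
  Add  :: "'m \<Rightarrow> 'm \<Rightarrow> 'm"
  Zero :: "'o \<Rightarrow> 'o \<Rightarrow> 'm"
  Neg  :: "'m \<Rightarrow> 'm"

definition preadditive :: "('o, 'm, 'x) precat_scheme \<Rightarrow> bool" where
  "preadditive C \<longleftrightarrow>
     (\<forall>a\<in>Ob C. Id C a \<in> Hom C a a)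
   \<and> (\<forall>a\<in>Ob C. \<forall>b\<in>Ob C. \<forall>c\<in>Ob C. \<forall>f\<in>Hom C a b. \<forall>g\<in>Hom C b c. Comp C g f \<in> Hom C a c)
   \<and> (\<forall>a\<in>Ob C. \<forall>b\<in>Ob C. \<forall>c\<in>Ob C. \<forall>d\<in>Ob C. \<forall>f\<in>Hom C a b. \<forall>g\<in>Hom C b c. \<forall>h\<in>Hom C c d.
        Comp C h (Comp C g f) = Comp C (Comp C h g) f)
   \<and> (\<forall>a\<in>Ob C. \<forall>b\<in>Ob C. \<forall>f\<in>Hom C a b. Comp C f (Id C a) = f \<and> Comp C (Id C b) f = f)
   \<and> (\<forall>a\<in>Ob C. \<forall>b\<in>Ob C.
        Zero C a b \<in> Hom C a b
      \<and> (\<forall>f\<in>Hom C a b. \<forall>g\<in>Hom C a b. Add C f g \<in> Hom C a b)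
      \<and> (\<forall>f\<in>Hom C a b. Neg C f \<in> Hom C a b)
      \<and> (\<forall>f\<in>Hom C a b. \<forall>g\<in>Hom C a b. \<forall>h\<in>Hom C a b. Add C (Add C f g) h = Add C f (Add C g h))
      \<and> (\<forall>f\<in>Hom C a b. \<forall>g\<in>Hom C a b. Add C f g = Add C g f)
      \<and> (\<forall>f\<in>Hom C a b. Add C f (Zero C a b) = f)
      \<and> (\<forall>f\<in>Hom C a b. Add C f (Neg C f) = Zero C a b))
   \<and> (\<forall>a\<in>Ob C. \<forall>b\<in>Ob C. \<forall>c\<in>Ob C. \<forall>f\<in>Hom C a b. \<forall>f'\<in>Hom C a b. \<forall>g\<in>Hom C b c.
        Comp C g (Add C f f') = Add C (Comp C g f) (Comp C g f'))
   \<and> (\<forall>a\<in>Ob C. \<forall>b\<in>Ob C. \<forall>c\<in>Ob C. \<forall>f\<in>Hom C a b. \<forall>g\<in>Hom C b c. \<forall>g'\<in>Hom C b c.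
        Comp C (Add C g g') f = Add C (Comp C g f) (Comp C g' f))"

text \<open>Morphisms [m] -> [n] of Lambda_+ (composition = function composition).\<close>
definition lam_hom :: "nat \<Rightarrow> nat \<Rightarrow> (int \<Rightarrow> int) \<Rightarrow> bool" where
  "lam_hom m n f \<longleftrightarrow> mono f \<and> (\<forall>j. f (j + int m + 1) = f j + int n + 1) \<and> f 0 \<ge> 0"

text \<open>Extension of a map given on 0..m to the unique map with f(j+m+1) = f(j)+n+1.\<close>
definition lam_ext :: "nat \<Rightarrow> nat \<Rightarrow> (int \<Rightarrow> int) \<Rightarrow> int \<Rightarrow> int" where
  "lam_ext m n g j = g (j mod (int m + 1)) + (j div (int m + 1)) * (int n + 1)"

definition eps :: "nat \<Rightarrow> nat \<Rightarrow> int \<Rightarrow> int" where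
  "eps n i = lam_ext (n - 1) n (\<lambda>j. if j < int i then j else j + 1)"

definition eta :: "nat \<Rightarrow> nat \<Rightarrow> int \<Rightarrow> int" where
  "eta n i = lam_ext (n + 1) n (\<lambda>j. if j \<le> int i then j else j - 1)"

text \<open>A duplicial module: a functor Lambda_+^op -> C, given by an object map Mo and
  a morphism map Mf m n f : M_n -> M_m for f : [m] -> [n].\<close>
definition duplicial :: "('o, 'm, 'x) precat_scheme \<Rightarrow> (nat \<Rightarrow> 'o)
    \<Rightarrow> (nat \<Rightarrow> nat \<Rightarrow> (int \<Rightarrow> int) \<Rightarrow> 'm) \<Rightarrow> bool" where
  "duplicial C Mo Mf \<longleftrightarrow>
     (\<forall>n. Mo n \<in> Ob C)
   \<and> (\<forall>m n f. lam_hom m n f \<longrightarrow> Mf m n f \<in> Hom C (Mo n) (Mo m))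
   \<and> (\<forall>m. Mf m m id = Id C (Mo m))
   \<and> (\<forall>l m n f g. lam_hom l m f \<longrightarrow> lam_hom m n g \<longrightarrow>
        Mf l n (g \<circ> f) = Comp C (Mf l m f) (Mf m n g))"

definition dface :: "(nat \<Rightarrow> nat \<Rightarrow> (int \<Rightarrow> int) \<Rightarrow> 'm) \<Rightarrow> nat \<Rightarrow> nat \<Rightarrow> 'm" where
  "dface Mf n i = Mf (n - 1) n (eps n i)"

definition sdeg :: "(nat \<Rightarrow> nat \<Rightarrow> (int \<Rightarrow> int) \<Rightarrow> 'm) \<Rightarrow> nat \<Rightarrow> nat \<Rightarrow> 'm" where
  "sdeg Mf n i = Mf (n + 1) n (eta n i)"

text \<open>Karoubi operator; for n = 0 the term through M_{-1} = 0 vanishes.\<close>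
definition karoubi :: "('o, 'm, 'x) precat_scheme \<Rightarrow> (nat \<Rightarrow> nat \<Rightarrow> (int \<Rightarrow> int) \<Rightarrow> 'm)
    \<Rightarrow> nat \<Rightarrow> 'm" where
  "karoubi C Mf n =
     (if n = 0 then Comp C (dface Mf 1 0) (sdeg Mf 0 1)
      else (let t = Add C (Comp C (dface Mf (n + 1) 0) (sdeg Mf n (n + 1)))
                          (Neg C (Comp C (sdeg Mf (n - 1) n) (dface Mf n 0)))
            in if even n then t else Neg C t))"

definition sgnmor :: "('o, 'm, 'x) precat_scheme \<Rightarrow> nat \<Rightarrow> 'm \<Rightarrow> 'm" where
  "sgnmor C k f = (if even k then f else Neg C f)"

text \<open>sseq C Mo Mf i n k = s_{n-1,i 1} s_{n-2,i 2} ... s_{n-k,i k} : M_{n-k} -> M_n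
  (for k = 0 the identity of M_n).\<close>
fun sseq :: "('o, 'm, 'x) precat_scheme \<Rightarrow> (nat \<Rightarrow> 'o) \<Rightarrow> (nat \<Rightarrow> nat \<Rightarrow> (int \<Rightarrow> int) \<Rightarrow> 'm)
    \<Rightarrow> (nat \<Rightarrow> nat) \<Rightarrow> nat \<Rightarrow> nat \<Rightarrow> 'm" where
  "sseq C Mo Mf i n 0 = Id C (Mo n)"
| "sseq C Mo Mf i n (Suc k) = Comp C (sseq C Mo Mf i n k) (sdeg Mf (n - Suc k) (i (Suc k)))"

end

theory Submission
  imports Defs
begin


lemma lam_ext_eq:
  assumes "0 \<le> r" "r \<le> int m"
  shows "lam_ext m n g (r + q * (int m + 1)) = g r + q * (int n + 1)"
proof -
  have "(r + q * (int m + 1)) mod (int m + 1) = r" using assms by simp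
  moreover have "(r + q * (int m + 1)) div (int m + 1) = q" using assms by simp
  ultimately show ?thesis by (simp add: lam_ext_def)
qed

lemma lam_ext_lo: "0 \<le> j \<Longrightarrow> j \<le> int m \<Longrightarrow> lam_ext m n g j = g j"
  using lam_ext_eq[of j m n g 0] by simp

lemma lam_ext_hi: "int m < j \<Longrightarrow> j \<le> 2 * int m + 1 \<Longrightarrow> lam_ext m n g j = g (j - int m - 1) + int n + 1"
  using lam_ext_eq[of "j - int m - 1" m n g 1] by simp

lemma lam_ext_decomp:
  obtains r q where "0 \<le> r" "r \<le> int m" "j = r + q * (int m + 1)"
proof -
  have "j = j mod (int m + 1) + (j div (int m + 1)) * (int m + 1)" by (metis mod_div_mult_eq)
  moreover have "0 \<le> j mod (int m + 1)" "j mod (int m + 1) \<le> int m"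
    using pos_mod_bound[of "int m + 1" j] by auto
  ultimately show ?thesis using that by blast
qed

lemma mono_int_step:
  fixes f :: "int \<Rightarrow> int"
  assumes "\<And>j. f j \<le> f (j + 1)"
  shows "mono f"
proof (rule monoI)
  fix x y :: int assume "x \<le> y"
  then obtain d where d: "y = x + int d" by (metis zle_iff_zadd)
  have "f x \<le> f (x + int d)" for d
  proof (induction d)
    case 0 then show ?case by simp
  next
    case (Suc d)
    have "f (x + int d) \<le> f (x + int d + 1)" by (rule assms)
    moreover have "x + int (Suc d) = x + int d + 1" by simp
    ultimately show ?case using Suc by (metis order_trans)
  qed
  then show "f x \<le> f y" using d by simp
qed

lemma lam_ext_hom:
  assumes step: "\<And>j. 0 \<le> j \<Longrightarrow> j < int m \<Longrightarrow> g j \<le> g (j + 1)"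
    and wrap: "g (int m) \<le> g 0 + int n + 1" and pos: "0 \<le> g 0"
  shows "lam_hom m n (lam_ext m n g)"
proof -
  have st: "lam_ext m n g j \<le> lam_ext m n g (j + 1)" for j
  proof -
    obtain r q where rq: "0 \<le> r" "r \<le> int m" "j = r + q * (int m + 1)"
      by (rule lam_ext_decomp)
    show ?thesis
    proof (cases "r < int m")
      case True
      have e: "j + 1 = (r + 1) + q * (int m + 1)" using rq by simp
      have a: "lam_ext m n g (j+1) = g (r+1) + q * (int n + 1)" unfolding e
        by (rule lam_ext_eq) (use rq True in auto)
      have b: "lam_ext m n g j = g r + q * (int n + 1)" unfolding rq(3)
        by (rule lam_ext_eq) (use rq in auto)
      show ?thesis unfolding a b using step[of r] rq True by simp
    next
      case False
      then have "r = int m" using rq by simp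
      have e: "j + 1 = 0 + (q + 1) * (int m + 1)" using rq \<open>r = int m\<close> by (simp add: algebra_simps)
      have a: "lam_ext m n g (j+1) = g 0 + (q+1) * (int n + 1)" unfolding e
        by (rule lam_ext_eq) auto
      have b: "lam_ext m n g j = g r + q * (int n + 1)" unfolding rq(3)
        by (rule lam_ext_eq) (use rq in auto)
      show ?thesis unfolding a b using wrap \<open>r = int m\<close> by (simp add: algebra_simps)
    qed
  qed
  have per: "lam_ext m n g (j + int m + 1) = lam_ext m n g j + int n + 1" for j
  proof -
    obtain r q where rq: "0 \<le> r" "r \<le> int m" "j = r + q * (int m + 1)"
      by (rule lam_ext_decomp)
    have "j + int m + 1 = r + (q + 1) * (int m + 1)" using rq by (simp add: algebra_simps)
    then show ?thesis using rq lam_ext_eq[of r m n g q] lam_ext_eq[of r m n g "q+1"]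
      by (simp add: algebra_simps)
  qed
  have "lam_ext m n g 0 = g 0" by (rule lam_ext_lo) auto
  then show ?thesis unfolding lam_hom_def using mono_int_step[of "lam_ext m n g", OF st] per pos by simp
qed

lemma eps_hom: "1 \<le> n \<Longrightarrow> i \<le> n \<Longrightarrow> lam_hom (n - 1) n (eps n i)"
  unfolding eps_def by (rule lam_ext_hom) auto

lemma eta_hom: "i \<le> n + 1 \<Longrightarrow> lam_hom (n + 1) n (eta n i)"
  unfolding eta_def by (rule lam_ext_hom) auto

lemma lam_hom_comp:
  assumes "lam_hom l m f" "lam_hom m n g" shows "lam_hom l n (g \<circ> f)"
proof -
  have mf: "mono f" and mg: "mono g" and pf: "\<And>j. f (j + int l + 1) = f j + int m + 1"
    and pg: "\<And>j. g (j + int m + 1) = g j + int n + 1" and f0: "f 0 \<ge> 0" and g0: "g 0 \<ge> 0"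
    using assms unfolding lam_hom_def by auto
  have "mono (g \<circ> f)" using mf mg by (simp add: mono_def)
  moreover have "(g \<circ> f) 0 \<ge> 0" using f0 g0 mg by (simp add: mono_def) (meson order_trans)
  ultimately show ?thesis unfolding lam_hom_def using pf pg by simp
qed

lemma periodic_eq:
  fixes f g :: "int \<Rightarrow> int"
  assumes p: "p > 0" and pf: "\<And>j. f (j + p) = f j + c" and pg: "\<And>j. g (j + p) = g j + c"
    and eq: "\<And>j. 0 \<le> j \<Longrightarrow> j < p \<Longrightarrow> f j = g j"
  shows "f = g"
proof
  fix j
  define h where "h j = f j - g j" for j
  have hp: "h (j + p) = h j" for j unfolding h_def using pf pg by simp
  have hq: "h (r + q * p) = h r" for r q
  proof (induct q rule: int_induct[where k=0])
    case base then show ?case by simp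
  next
    case (step1 i)
    have "r + (i + 1) * p = (r + i * p) + p" by (simp add: algebra_simps)
    then show ?case using step1 hp by (metis)
  next
    case (step2 i)
    have "r + i * p = (r + (i - 1) * p) + p" by (simp add: algebra_simps)
    then show ?case using step2 hp by metis
  qed
  have "j = j mod p + (j div p) * p" by (metis mod_div_mult_eq)
  then have "h j = h (j mod p)" using hq by metis
  moreover have "h (j mod p) = 0" unfolding h_def using eq[of "j mod p"] p by simp
  ultimately show "f j = g j" unfolding h_def by simp
qed

lemma lam_hom_eq:
  assumes "lam_hom m n f" "lam_hom m n g" "\<And>j. 0 \<le> j \<Longrightarrow> j \<le> int m \<Longrightarrow> f j = g j"
  shows "f = g"
proof (rule periodic_eq[where p = "int m + 1" and c = "int n + 1"])
  show "f (j + (int m + 1)) = f j + (int n + 1)" for j using assms(1) unfolding lam_hom_def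
    by (metis add.assoc)
  show "g (j + (int m + 1)) = g j + (int n + 1)" for j using assms(2) unfolding lam_hom_def
    by (metis add.assoc)
qed (use assms(3) in auto)



lemma eps_hom': "i \<le> Suc n \<Longrightarrow> lam_hom n (Suc n) (eps (Suc n) i)"
  using eps_hom[of "Suc n" i] by simp
lemma eta_hom': "i \<le> Suc n \<Longrightarrow> lam_hom (Suc n) n (eta n i)"
  using eta_hom[of i n] by simp


lemma F1a: "eta p 0 \<circ> (eta (Suc p) (Suc p + 1) \<circ> eps (Suc p + 1) 0) = eta p (Suc p)"
proof (rule lam_hom_eq[where m="Suc p" and n=p])
  show "lam_hom (Suc p) p (eta p 0 \<circ> (eta (Suc p) (Suc p + 1) \<circ> eps (Suc p + 1) 0))"
    using lam_hom_comp[OF lam_hom_comp[OF eps_hom'[of 0 "Suc p"] eta_hom'[of "Suc (Suc p)" "Suc p"]] eta_hom'[of 0 p]] by simp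
  show "lam_hom (Suc p) p (eta p (Suc p))" using eta_hom'[of "Suc p" p] by simp
  fix j :: int assume "0 \<le> j" "j \<le> int (Suc p)"
  then show "(eta p 0 \<circ> (eta (Suc p) (Suc p + 1) \<circ> eps (Suc p + 1) 0)) j = eta p (Suc p) j"
    by (cases "j \<le> int p") (auto simp: eps_def eta_def lam_ext_lo lam_ext_hi)
qed

lemma F1b: "eta p 0 \<circ> (eps (Suc p) 0 \<circ> eta p (Suc p)) = eta p (Suc p)"
proof (rule lam_hom_eq[where m="Suc p" and n=p])
  show "lam_hom (Suc p) p (eta p 0 \<circ> (eps (Suc p) 0 \<circ> eta p (Suc p)))"
    using lam_hom_comp[OF lam_hom_comp[OF eta_hom'[of "Suc p" p] eps_hom'[of 0 p]] eta_hom'[of 0 p]] by simp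
  show "lam_hom (Suc p) p (eta p (Suc p))" using eta_hom'[of "Suc p" p] by simp
  fix j :: int assume "0 \<le> j" "j \<le> int (Suc p)"
  then show "(eta p 0 \<circ> (eps (Suc p) 0 \<circ> eta p (Suc p))) j = eta p (Suc p) j"
    by (cases "j \<le> int p") (auto simp: eps_def eta_def lam_ext_lo lam_ext_hi)
qed

lemma F2a: assumes "1 \<le> i" "i \<le> p"
  shows "eta p i \<circ> (eta (Suc p) (Suc p + 1) \<circ> eps (Suc p + 1) 0)
       = (eta p (Suc p) \<circ> eps (Suc p) 0) \<circ> eta p (i - 1)"
proof (rule lam_hom_eq[where m="Suc p" and n=p])
  show "lam_hom (Suc p) p (eta p i \<circ> (eta (Suc p) (Suc p + 1) \<circ> eps (Suc p + 1) 0))"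
    using assms lam_hom_comp[OF lam_hom_comp[OF eps_hom'[of 0 "Suc p"] eta_hom'[of "Suc (Suc p)" "Suc p"]] eta_hom'[of i p]] by simp
  show "lam_hom (Suc p) p ((eta p (Suc p) \<circ> eps (Suc p) 0) \<circ> eta p (i - 1))"
    using assms lam_hom_comp[OF eta_hom'[of "i - 1" p] lam_hom_comp[OF eps_hom'[of 0 p] eta_hom'[of "Suc p" p]]] by simp
  fix j :: int assume "0 \<le> j" "j \<le> int (Suc p)"
  then show "(eta p i \<circ> (eta (Suc p) (Suc p + 1) \<circ> eps (Suc p + 1) 0)) j
       = ((eta p (Suc p) \<circ> eps (Suc p) 0) \<circ> eta p (i - 1)) j"
    using assms by (cases "j \<le> int p") (auto simp: eps_def eta_def lam_ext_lo lam_ext_hi)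
qed

lemma F2b: assumes "1 \<le> i" "i \<le> Suc q"
  shows "eta (Suc q) i \<circ> (eps (Suc (Suc q)) 0 \<circ> eta (Suc q) (Suc (Suc q)))
       = (eps (Suc q) 0 \<circ> eta q (Suc q)) \<circ> eta (Suc q) (i - 1)"
proof (rule lam_hom_eq[where m="Suc (Suc q)" and n="Suc q"])
  show "lam_hom (Suc (Suc q)) (Suc q) (eta (Suc q) i \<circ> (eps (Suc (Suc q)) 0 \<circ> eta (Suc q) (Suc (Suc q))))"
    using assms lam_hom_comp[OF lam_hom_comp[OF eta_hom'[of "Suc (Suc q)" "Suc q"] eps_hom'[of 0 "Suc q"]] eta_hom'[of i "Suc q"]] by simp
  show "lam_hom (Suc (Suc q)) (Suc q) ((eps (Suc q) 0 \<circ> eta q (Suc q)) \<circ> eta (Suc q) (i - 1))"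
    using assms lam_hom_comp[OF eta_hom'[of "i - 1" "Suc q"] lam_hom_comp[OF eta_hom'[of "Suc q" q] eps_hom'[of 0 q]]] by simp
  fix j :: int assume "0 \<le> j" "j \<le> int (Suc (Suc q))"
  then show "(eta (Suc q) i \<circ> (eps (Suc (Suc q)) 0 \<circ> eta (Suc q) (Suc (Suc q)))) j
       = ((eps (Suc q) 0 \<circ> eta q (Suc q)) \<circ> eta (Suc q) (i - 1)) j"
    using assms by (cases "j \<le> int (Suc q)") (auto simp: eps_def eta_def lam_ext_lo lam_ext_hi)
qed



locale dup =
  fixes C :: "('o, 'm, 'x) precat_scheme" and Mo :: "nat \<Rightarrow> 'o"
    and Mf :: "nat \<Rightarrow> nat \<Rightarrow> (int \<Rightarrow> int) \<Rightarrow> 'm"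
  assumes pa: "preadditive C" and du: "duplicial C Mo Mf"
begin

abbreviation "H a b \<equiv> Hom C (Mo a) (Mo b)"
abbreviation "Z a b \<equiv> Zero C (Mo a) (Mo b)"

lemma ob: "Mo n \<in> Ob C" using du by (simp add: duplicial_def)

lemma mf_hom: "lam_hom m n f \<Longrightarrow> Mf m n f \<in> H n m"
  using du by (simp add: duplicial_def)

lemma mf_comp: "lam_hom l m f \<Longrightarrow> lam_hom m n g \<Longrightarrow> Comp C (Mf l m f) (Mf m n g) = Mf l n (g \<circ> f)"
  using du by (simp add: duplicial_def)

lemmas P = pa[unfolded preadditive_def]
lemmas P_comp = P[THEN conjunct2, THEN conjunct1]
lemmas P_assoc = P[THEN conjunct2, THEN conjunct2, THEN conjunct1]
lemmas P_unit = P[THEN conjunct2, THEN conjunct2, THEN conjunct2, THEN conjunct1]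
lemmas P_grp = P[THEN conjunct2, THEN conjunct2, THEN conjunct2, THEN conjunct2, THEN conjunct1]
lemmas P_dl = P[THEN conjunct2, THEN conjunct2, THEN conjunct2, THEN conjunct2, THEN conjunct2, THEN conjunct1]
lemmas P_dr = P[THEN conjunct2, THEN conjunct2, THEN conjunct2, THEN conjunct2, THEN conjunct2, THEN conjunct2]

lemma G: "Z a b \<in> H a b
      \<and> (\<forall>f\<in>H a b. \<forall>g\<in>H a b. Add C f g \<in> H a b)
      \<and> (\<forall>f\<in>H a b. Neg C f \<in> H a b)
      \<and> (\<forall>f\<in>H a b. \<forall>g\<in>H a b. \<forall>h\<in>H a b. Add C (Add C f g) h = Add C f (Add C g h))
      \<and> (\<forall>f\<in>H a b. \<forall>g\<in>H a b. Add C f g = Add C g f)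
      \<and> (\<forall>f\<in>H a b. Add C f (Z a b) = f)
      \<and> (\<forall>f\<in>H a b. Add C f (Neg C f) = Z a b)"
  using P_grp ob by blast

lemma comp_closed: "f \<in> H a b \<Longrightarrow> g \<in> H b c \<Longrightarrow> Comp C g f \<in> H a c"
  using P_comp ob by blast
lemma assoc: "f \<in> H a b \<Longrightarrow> g \<in> H b c \<Longrightarrow> h \<in> H c d \<Longrightarrow> Comp C h (Comp C g f) = Comp C (Comp C h g) f"
  using P_assoc ob by blast
lemma id_r: "f \<in> H a b \<Longrightarrow> Comp C f (Id C (Mo a)) = f"
  using P_unit ob by blast
lemma id_l: "f \<in> H a b \<Longrightarrow> Comp C (Id C (Mo b)) f = f"
  using P_unit ob by blast
lemma zero_closed: "Z a b \<in> H a b"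
  using G by blast
lemma add_closed: "f \<in> H a b \<Longrightarrow> g \<in> H a b \<Longrightarrow> Add C f g \<in> H a b"
  using G by blast
lemma neg_closed: "f \<in> H a b \<Longrightarrow> Neg C f \<in> H a b"
  using G by blast
lemma add_assoc: "f \<in> H a b \<Longrightarrow> g \<in> H a b \<Longrightarrow> h \<in> H a b \<Longrightarrow> Add C (Add C f g) h = Add C f (Add C g h)"
  using G by blast
lemma add_comm: "f \<in> H a b \<Longrightarrow> g \<in> H a b \<Longrightarrow> Add C f g = Add C g f"
  using G by blast
lemma add_zero: "f \<in> H a b \<Longrightarrow> Add C f (Z a b) = f"
  using G by blast
lemma add_neg: "f \<in> H a b \<Longrightarrow> Add C f (Neg C f) = Z a b"
  using G by blast
lemma dist_l: "f \<in> H a b \<Longrightarrow> f' \<in> H a b \<Longrightarrow> g \<in> H b c \<Longrightarrow> Comp C g (Add C f f') = Add C (Comp C g f) (Comp C g f')"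
  using P_dl ob by blast
lemma dist_r: "f \<in> H a b \<Longrightarrow> g \<in> H b c \<Longrightarrow> g' \<in> H b c \<Longrightarrow> Comp C (Add C g g') f = Add C (Comp C g f) (Comp C g' f)"
  using P_dr ob by blast

lemma zero_add: "f \<in> H a b \<Longrightarrow> Add C (Z a b) f = f"
  using add_comm add_zero zero_closed by metis

lemma cancel: assumes "x \<in> H a b" "y \<in> H a b" "z \<in> H a b" "Add C x y = Add C x z" shows "y = z"
proof -
  have nx: "Neg C x \<in> H a b" using assms neg_closed by blast
  have e: "Add C (Neg C x) x = Z a b" using add_comm add_neg assms(1) nx by metis
  have "Add C (Add C (Neg C x) x) y = Add C (Add C (Neg C x) x) z"
    using assms add_assoc nx by metis
  then show ?thesis unfolding e using zero_add assms by metis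
qed

lemma comp_zero_r: assumes "g \<in> H b c" shows "Comp C g (Z a b) = Z a c"
proof -
  have c: "Comp C g (Z a b) \<in> H a c" using comp_closed zero_closed assms by blast
  have "Add C (Comp C g (Z a b)) (Comp C g (Z a b)) = Comp C g (Add C (Z a b) (Z a b))"
    using dist_l zero_closed assms by metis
  also have "\<dots> = Add C (Comp C g (Z a b)) (Z a c)" using add_zero zero_closed c by metis
  finally show ?thesis using cancel c zero_closed by blast
qed

lemma comp_zero_l: assumes "f \<in> H a b" shows "Comp C (Z b c) f = Z a c"
proof -
  have c: "Comp C (Z b c) f \<in> H a c" using comp_closed zero_closed assms by blast
  have "Add C (Comp C (Z b c) f) (Comp C (Z b c) f) = Comp C (Add C (Z b c) (Z b c)) f"
    using dist_r zero_closed assms by metis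
  also have "\<dots> = Add C (Comp C (Z b c) f) (Z a c)" using add_zero zero_closed c by metis
  finally show ?thesis using cancel c zero_closed by blast
qed

lemma neg_unique: assumes "f \<in> H a b" "g \<in> H a b" "Add C f g = Z a b" shows "Neg C f = g"
  using cancel[of f a b "Neg C f" g] assms add_neg neg_closed by metis

lemma neg_neg: "f \<in> H a b \<Longrightarrow> Neg C (Neg C f) = f"
  using neg_unique[of "Neg C f" a b f] neg_closed add_comm add_neg by metis

lemma neg_zero: "Neg C (Z a b) = Z a b"
  using neg_unique[of "Z a b" a b "Z a b"] zero_closed add_zero by metis

lemma comp_neg_r: assumes "f \<in> H a b" "g \<in> H b c" shows "Comp C g (Neg C f) = Neg C (Comp C g f)"
proof -
  have "Add C (Comp C g f) (Comp C g (Neg C f)) = Z a c"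
    using dist_l[of f a b "Neg C f" g c] assms neg_closed add_neg comp_zero_r by metis
  then show ?thesis using neg_unique comp_closed neg_closed assms by metis
qed

lemma comp_neg_l: assumes "f \<in> H a b" "g \<in> H b c" shows "Comp C (Neg C g) f = Neg C (Comp C g f)"
proof -
  have "Add C (Comp C g f) (Comp C (Neg C g) f) = Z a c"
    using dist_r[of f a b g c "Neg C g"] assms neg_closed add_neg comp_zero_l by metis
  then show ?thesis using neg_unique comp_closed neg_closed assms by metis
qed

lemma sg_closed: "f \<in> H a b \<Longrightarrow> sgnmor C k f \<in> H a b"
  by (simp add: sgnmor_def neg_closed)
lemma sg_comp_l: "f \<in> H a b \<Longrightarrow> g \<in> H b c \<Longrightarrow> Comp C (sgnmor C k g) f = sgnmor C k (Comp C g f)"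
  by (simp add: sgnmor_def comp_neg_l)
lemma sg_comp_r: "f \<in> H a b \<Longrightarrow> g \<in> H b c \<Longrightarrow> Comp C g (sgnmor C k f) = sgnmor C k (Comp C g f)"
  by (simp add: sgnmor_def comp_neg_r)
lemma sg_Suc: "f \<in> H a b \<Longrightarrow> sgnmor C (Suc k) f = Neg C (sgnmor C k f)"
  by (simp add: sgnmor_def neg_neg)
lemma sg_neg: "f \<in> H a b \<Longrightarrow> sgnmor C k (Neg C f) = sgnmor C (Suc k) f"
  by (simp add: sgnmor_def neg_neg)
lemma sg_zero: "sgnmor C k (Z a b) = Z a b"
  by (simp add: sgnmor_def neg_zero)

lemma sdeg_hom: "i \<le> Suc m \<Longrightarrow> sdeg Mf m i \<in> H m (Suc m)"
  unfolding sdeg_def using mf_hom eta_hom' by simp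
lemma dface_hom: "i \<le> Suc m \<Longrightarrow> dface Mf (Suc m) i \<in> H (Suc m) m"
  unfolding dface_def using mf_hom eps_hom' by simp

lemma A1: "Comp C (dface Mf (Suc (Suc p)) 0) (sdeg Mf (Suc p) (Suc (Suc p)))
   = Mf (Suc p) (Suc p) (eta (Suc p) (Suc p + 1) \<circ> eps (Suc p + 1) 0)"
  unfolding dface_def sdeg_def using mf_comp[OF eps_hom'[of 0 "Suc p"] eta_hom'[of "Suc (Suc p)" "Suc p"]]
  by simp
lemma A2: "Comp C (sdeg Mf p (Suc p)) (dface Mf (Suc p) 0)
   = Mf (Suc p) (Suc p) (eps (Suc p) 0 \<circ> eta p (Suc p))"
  unfolding dface_def sdeg_def using mf_comp[OF eta_hom'[of "Suc p" p] eps_hom'[of 0 p]]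
  by simp

lemma A1_hom: "lam_hom (Suc p) (Suc p) (eta (Suc p) (Suc p + 1) \<circ> eps (Suc p + 1) 0)"
  using lam_hom_comp[OF eps_hom'[of 0 "Suc p"] eta_hom'[of "Suc (Suc p)" "Suc p"]] by simp
lemma A2_hom: "lam_hom (Suc p) (Suc p) (eps (Suc p) 0 \<circ> eta p (Suc p))"
  using lam_hom_comp[OF eta_hom'[of "Suc p" p] eps_hom'[of 0 p]] by simp

lemma kar_Suc: "karoubi C Mf (Suc p) = sgnmor C (Suc p)
   (Add C (Mf (Suc p) (Suc p) (eta (Suc p) (Suc p + 1) \<circ> eps (Suc p + 1) 0))
          (Neg C (Mf (Suc p) (Suc p) (eps (Suc p) 0 \<circ> eta p (Suc p)))))"
  using A1[of p] A2[of p] by (simp add: karoubi_def sgnmor_def Let_def)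

lemma kar_hom: "karoubi C Mf n \<in> H n n"
proof (cases n)
  case 0
  then show ?thesis unfolding karoubi_def
    using comp_closed[OF sdeg_hom[of 1 0] dface_hom[of 0 0]] by simp
next
  case (Suc p)
  have "karoubi C Mf (Suc p) \<in> H (Suc p) (Suc p)" unfolding kar_Suc
    by (intro sg_closed add_closed neg_closed mf_hom A1_hom A2_hom)
  then show ?thesis using Suc by simp
qed



lemma expand_r:
  assumes hx: "lam_hom a b h" and h1: "lam_hom a a F1" and h2: "lam_hom a a F2"
  shows "Comp C (sgnmor C k (Add C (Mf a a F1) (Neg C (Mf a a F2)))) (Mf a b h)
       = sgnmor C k (Add C (Mf a b (h \<circ> F1)) (Neg C (Mf a b (h \<circ> F2))))"
proof -
  have m1: "Mf a a F1 \<in> H a a" and m2: "Mf a a F2 \<in> H a a" and mx: "Mf a b h \<in> H b a"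
    using mf_hom h1 h2 hx by auto
  have "Comp C (sgnmor C k (Add C (Mf a a F1) (Neg C (Mf a a F2)))) (Mf a b h)
      = sgnmor C k (Comp C (Add C (Mf a a F1) (Neg C (Mf a a F2))) (Mf a b h))"
    using sg_comp_l[OF mx add_closed[OF m1 neg_closed[OF m2]]] .
  also have "\<dots> = sgnmor C k (Add C (Comp C (Mf a a F1) (Mf a b h)) (Neg C (Comp C (Mf a a F2) (Mf a b h))))"
    using dist_r[OF mx m1 neg_closed[OF m2]] comp_neg_l[OF mx m2] by simp
  also have "\<dots> = sgnmor C k (Add C (Mf a b (h \<circ> F1)) (Neg C (Mf a b (h \<circ> F2))))"
    using mf_comp[OF h1 hx] mf_comp[OF h2 hx] by simp
  finally show ?thesis .
qed

lemma expand_l: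
  assumes hx: "lam_hom c a h" and h1: "lam_hom a a F1" and h2: "lam_hom a a F2"
  shows "Comp C (Mf c a h) (sgnmor C k (Add C (Mf a a F1) (Neg C (Mf a a F2))))
       = sgnmor C k (Add C (Mf c a (F1 \<circ> h)) (Neg C (Mf c a (F2 \<circ> h))))"
proof -
  have m1: "Mf a a F1 \<in> H a a" and m2: "Mf a a F2 \<in> H a a" and mx: "Mf c a h \<in> H a c"
    using mf_hom h1 h2 hx by auto
  have "Comp C (Mf c a h) (sgnmor C k (Add C (Mf a a F1) (Neg C (Mf a a F2))))
      = sgnmor C k (Comp C (Mf c a h) (Add C (Mf a a F1) (Neg C (Mf a a F2))))"
    using sg_comp_r[OF add_closed[OF m1 neg_closed[OF m2]] mx] .
  also have "\<dots> = sgnmor C k (Add C (Comp C (Mf c a h) (Mf a a F1)) (Neg C (Comp C (Mf c a h) (Mf a a F2))))"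
    using dist_l[OF m1 neg_closed[OF m2] mx] comp_neg_r[OF m2 mx] by simp
  also have "\<dots> = sgnmor C k (Add C (Mf c a (F1 \<circ> h)) (Neg C (Mf c a (F2 \<circ> h))))"
    using mf_comp[OF hx h1] mf_comp[OF hx h2] by simp
  finally show ?thesis .
qed

lemma step1: assumes "i \<le> p"
  shows "Comp C (karoubi C Mf (Suc p)) (sdeg Mf p i) =
    (if i = 0 then Z p (Suc p) else Neg C (Comp C (sdeg Mf p (i - 1)) (karoubi C Mf p)))"
proof -
  have hx: "lam_hom (Suc p) p (eta p i)" using eta_hom' assms by simp
  have L: "Comp C (karoubi C Mf (Suc p)) (sdeg Mf p i) = sgnmor C (Suc p)
     (Add C (Mf (Suc p) p (eta p i \<circ> (eta (Suc p) (Suc p + 1) \<circ> eps (Suc p + 1) 0)))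
            (Neg C (Mf (Suc p) p (eta p i \<circ> (eps (Suc p) 0 \<circ> eta p (Suc p))))))"
    unfolding kar_Suc sdeg_def Suc_eq_plus1[symmetric] using expand_r[OF hx A1_hom A2_hom] by simp
  show ?thesis
  proof (cases "i = 0")
    case True
    have S: "Mf (Suc p) p (eta p (Suc p)) \<in> H p (Suc p)" using mf_hom eta_hom' by simp
    show ?thesis using L F1a[of p] F1b[of p] True add_neg[OF S] sg_zero by simp
  next
    case False
    then obtain q where p: "p = Suc q" using assms by (cases p) auto
    have hs: "lam_hom (Suc p) p (eta p (i - 1))" using eta_hom' assms by simp
    have b1: "lam_hom p p (eta p (Suc p) \<circ> eps (Suc p) 0)" using A1_hom[of q] p by simp
    have b2: "lam_hom p p (eps p 0 \<circ> eta q p)" using A2_hom[of q] p by simp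
    have kp: "karoubi C Mf p = sgnmor C p (Add C (Mf p p (eta p (Suc p) \<circ> eps (Suc p) 0))
        (Neg C (Mf p p (eps p 0 \<circ> eta q p))))" using kar_Suc[of q] p by simp
    have R: "Comp C (sdeg Mf p (i - 1)) (karoubi C Mf p) = sgnmor C p
       (Add C (Mf (Suc p) p ((eta p (Suc p) \<circ> eps (Suc p) 0) \<circ> eta p (i - 1)))
              (Neg C (Mf (Suc p) p ((eps p 0 \<circ> eta q p) \<circ> eta p (i - 1)))))"
      unfolding kp sdeg_def Suc_eq_plus1[symmetric] using expand_l[OF hs b1 b2] by simp
    have f2a: "eta p i \<circ> (eta (Suc p) (Suc p + 1) \<circ> eps (Suc p + 1) 0)
       = (eta p (Suc p) \<circ> eps (Suc p) 0) \<circ> eta p (i - 1)" using F2a[of i p] False assms by simp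
    have f2b: "eta p i \<circ> (eps (Suc p) 0 \<circ> eta p (Suc p)) = (eps p 0 \<circ> eta q p) \<circ> eta p (i - 1)"
      using F2b[of i q] False assms p by simp
    have Y: "Add C (Mf (Suc p) p ((eta p (Suc p) \<circ> eps (Suc p) 0) \<circ> eta p (i - 1)))
              (Neg C (Mf (Suc p) p ((eps p 0 \<circ> eta q p) \<circ> eta p (i - 1)))) \<in> H p (Suc p)"
      using lam_hom_comp[OF hs b1] lam_hom_comp[OF hs b2]
      by (intro add_closed neg_closed mf_hom)
    show ?thesis unfolding L R f2a f2b using False sg_Suc[OF Y] by simp
  qed
qed


lemma sseq_hom:
  assumes "\<forall>j. 1 \<le> j \<and> j \<le> k \<longrightarrow> i j + j \<le> n" "k \<le> n"
  shows "sseq C Mo Mf i n k \<in> H (n - k) n"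
  using assms
proof (induction k)
  case 0
  then show ?case using P[THEN conjunct1] ob by simp
next
  case (Suc k)
  have h1: "sseq C Mo Mf i n k \<in> H (n - k) n" using Suc by simp
  have "i (Suc k) \<le> Suc (n - Suc k)" using Suc.prems(1) Suc.prems(2) by force
  then have h2: "sdeg Mf (n - Suc k) (i (Suc k)) \<in> H (n - Suc k) (Suc (n - Suc k))" by (rule sdeg_hom)
  have e: "Suc (n - Suc k) = n - k" using Suc.prems(2) by simp
  show ?case using comp_closed[OF h2[unfolded e] h1] by simp
qed

lemma main:
  assumes "1 \<le> k" "k \<le> n" "\<forall>j. 1 \<le> j \<and> j < k \<longrightarrow> i (Suc j) < i j" "i 1 < n"
  shows "Comp C (karoubi C Mf n) (sseq C Mo Mf i n k) =
           (if i k = 0 then Zero C (Mo (n - k)) (Mo n)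
            else sgnmor C k (Comp C (sseq C Mo Mf (\<lambda>j. i j - 1) n k) (karoubi C Mf (n - k))))"
  using assms
proof (induction k)
  case 0
  then show ?case by simp
next
  case (Suc k)
  note pr = Suc.prems
  have bnd: "\<forall>j. 1 \<le> j \<and> j \<le> Suc k \<longrightarrow> i j + j \<le> n"
  proof (intro allI impI)
    fix j assume "1 \<le> j \<and> j \<le> Suc k"
    then show "i j + j \<le> n"
    proof (induction j)
      case 0 then show ?case by simp
    next
      case (Suc j)
      show ?case
      proof (cases "j = 0")
        case True then show ?thesis using Suc.prems pr(4) by simp
      next
        case False
        then have "i j + j \<le> n" using Suc by simp
        moreover have "i (Suc j) < i j" using Suc.prems False pr(3) by simp
        ultimately show ?thesis by simp
      qed
    qed
  qed
  define p where "p = n - Suc k"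
  have np: "n - k = Suc p" using Suc.prems p_def by simp
  have ip: "i (Suc k) \<le> p" using bnd p_def by force
  have x: "sdeg Mf p (i (Suc k)) \<in> H p (Suc p)" using sdeg_hom ip by simp
  have kh: "karoubi C Mf n \<in> H n n" by (rule kar_hom)
  show ?case
  proof (cases "k = 0")
    case True
    then have n: "n = Suc p" using np by simp
    have s1: "sseq C Mo Mf i n 1 = sdeg Mf p (i 1)"
      using id_l[OF x] n True by simp
    have s1': "sseq C Mo Mf (\<lambda>j. i j - 1) n 1 = sdeg Mf p (i 1 - 1)"
      using id_l[OF sdeg_hom[of "i 1 - 1" p]] n True ip by simp
    show ?thesis using step1[OF ip] True n s1 s1' kar_hom[of p] sdeg_hom[of "i 1 - 1" p] ip
      by (simp add: sgnmor_def)
  next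
    case False
    have dec: "\<forall>j. 1 \<le> j \<and> j < k \<longrightarrow> i (Suc j) < i j" using Suc.prems by simp
    have "i (Suc k) < i k" using Suc.prems(3) False by simp
    then have ik: "i k \<noteq> 0" by simp
    have IH: "Comp C (karoubi C Mf n) (sseq C Mo Mf i n k) =
       sgnmor C k (Comp C (sseq C Mo Mf (\<lambda>j. i j - 1) n k) (karoubi C Mf (n - k)))"
      using Suc.IH[OF _ _ dec Suc.prems(4)] False Suc.prems ik by simp
    have S: "sseq C Mo Mf i n k \<in> H (Suc p) n" using sseq_hom[of k i n] bnd Suc.prems np by simp
    have S': "sseq C Mo Mf (\<lambda>j. i j - 1) n k \<in> H (Suc p) n"
      using sseq_hom[of k "\<lambda>j. i j - 1" n] bnd Suc.prems np by force
    have K: "karoubi C Mf (Suc p) \<in> H (Suc p) (Suc p)" by (rule kar_hom)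
    have "Comp C (karoubi C Mf n) (sseq C Mo Mf i n (Suc k))
        = Comp C (Comp C (karoubi C Mf n) (sseq C Mo Mf i n k)) (sdeg Mf p (i (Suc k)))"
      using assoc[OF x S kh] p_def by simp
    also have "\<dots> = sgnmor C k (Comp C (sseq C Mo Mf (\<lambda>j. i j - 1) n k)
                        (Comp C (karoubi C Mf (Suc p)) (sdeg Mf p (i (Suc k)))))"
      unfolding IH np using sg_comp_l[OF x comp_closed[OF K S']] assoc[OF x K S'] by simp
    finally have E: "Comp C (karoubi C Mf n) (sseq C Mo Mf i n (Suc k)) = \<dots>" .
    show ?thesis
    proof (cases "i (Suc k) = 0")
      case True
      then show ?thesis unfolding E step1[OF ip] using comp_zero_r[OF S'] sg_zero p_def by simp
    next
      case False
      have s: "sdeg Mf p (i (Suc k) - 1) \<in> H p (Suc p)" using sdeg_hom ip by simp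
      have T: "Comp C (sseq C Mo Mf (\<lambda>j. i j - 1) n k) (Comp C (sdeg Mf p (i (Suc k) - 1)) (karoubi C Mf p))
         \<in> H p n" using comp_closed[OF comp_closed[OF kar_hom s] S'] .
      have "sgnmor C k (Comp C (sseq C Mo Mf (\<lambda>j. i j - 1) n k)
                        (Comp C (karoubi C Mf (Suc p)) (sdeg Mf p (i (Suc k)))))
          = sgnmor C (Suc k) (Comp C (Comp C (sseq C Mo Mf (\<lambda>j. i j - 1) n k) (sdeg Mf p (i (Suc k) - 1))) (karoubi C Mf p))"
      proof -
        have "Comp C (sseq C Mo Mf (\<lambda>j. i j - 1) n k)
                        (Comp C (karoubi C Mf (Suc p)) (sdeg Mf p (i (Suc k))))
           = Neg C (Comp C (sseq C Mo Mf (\<lambda>j. i j - 1) n k) (Comp C (sdeg Mf p (i (Suc k) - 1)) (karoubi C Mf p)))"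
          unfolding step1[OF ip] using False comp_neg_r[OF comp_closed[OF kar_hom s] S'] by simp
        then show ?thesis using sg_neg[OF T] assoc[OF kar_hom s S'] by simp
      qed
      then show ?thesis unfolding E using False p_def by simp
    qed
  qed
qed

end

theorem mainTheorem12:
  fixes C :: "('o, 'm, 'x) precat_scheme"
    and Mo :: "nat \<Rightarrow> 'o"
    and Mf :: "nat \<Rightarrow> nat \<Rightarrow> (int \<Rightarrow> int) \<Rightarrow> 'm"
    and i :: "nat \<Rightarrow> nat"
    and n k :: nat
  assumes "preadditive C"
    and "duplicial C Mo Mf"
    and "1 \<le> n" and "1 \<le> k" and "k \<le> n"
    and "\<forall>j. 1 \<le> j \<and> j < k \<longrightarrow> i (Suc j) < i j"
    and "i 1 < n"
  shows "Comp C (karoubi C Mf n) (sseq C Mo Mf i n k) =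
           (if i k = 0 then Zero C (Mo (n - k)) (Mo n)
            else sgnmor C k (Comp C (sseq C Mo Mf (\<lambda>j. i j - 1) n k) (karoubi C Mf (n - k))))"
proof -
  interpret dup C Mo Mf using assms(1,2) by unfold_locales
  show ?thesis by (rule main[OF assms(4) assms(5) assms(6) assms(7)])
qed

end
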